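(* Let $\mathbf{S}=\mathbf{V}\boldsymbol{\Lambda}\mathbf{V}^{\mathsf{H}}$ and $\hat{\mathbf{S}}$ be $N\times N$ graph shift operators. Let $\mathbf{E}=\mathbf{U}\mathbf{M}\mathbf{U}^{\mathsf{H}}\in\mathcal{E}(\mathbf{S},\hat{\mathbf{S}})$ be a relative perturbation matrix whose norm satisfies $$d(\mathbf{S},\hat{\mathbf{S}})\le\|\mathbf{E}\|\le\varepsilon.$$ Then for any integral Lipschitz filter $\mathbf{h}$ with integral Lipschitz constant $C$, $$\|\mathbf{H}(\mathbf{S})-\mathbf{H}(\hat{\mathbf{S}})\|_{\mathcal{P}}\le 2C\left(1+\delta\sqrt{N}\right)\varepsilon+\mathcal{O}(\varepsilon^2),$$ where $\delta:=(\|\mathbf{U}-\mathbf{V}\|_2+1)^2-1$ is the eigenvector misalignment between $\mathbf{S}$ and $\mathbf{E}$.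
   Context: A graph shift operator is a real symmetric $N\times N$ matrix; $\mathbf{S}=\mathbf{V}\boldsymbol{\Lambda}\mathbf{V}^{\mathsf{H}}$ with $\mathbf{V}$ orthonormal eigenvectors and $\boldsymbol{\Lambda}$ diagonal; $\mathbf{E}$ is symmetric with $\mathbf{U}$ orthonormal and $\mathbf{M}$ diagonal. $\|\cdot\|,\|\cdot\|_2$ denote spectral norm (Euclidean norm for vectors). $\mathcal{P}$ is the set of $N\times N$ permutation matrices. The set of relative perturbation matrices modulo permutation is $\mathcal{E}(\mathbf{S},\hat{\mathbf{S}})=\{\mathbf{E}:\mathbf{P}^{\mathsf{T}}\hat{\mathbf{S}}\mathbf{P}=\mathbf{S}+(\mathbf{E}\mathbf{S}+\mathbf{S}\mathbf{E})\text{ for some }\mathbf{P}\in\mathcal{P}\}$, and $d(\mathbf{S},\hat{\mathbf{S}})=\min\{\|\mathbf{E}\|:\mathbf{P}\in\mathcal{P},\ \mathbf{P}^{\mathsf{T}}\hat{\mathbf{S}}\mathbf{P}=\mathbf{S}+\mathbf{E}\mathbf{S}+\mathbf{S}\mathbf{E}\}$. For linear operators, $\|\mathbf{A}-\hat{\mathbf{A}}\|_{\mathcal{P}}=\min_{\mathbf{P}\in\mathcal{P}}\max_{\|\mathbf{x}\|=1}\|\mathbf{P}^{\mathsf{T}}(\mathbf{A}\mathbf{x})-\hat{\mathbf{A}}(\mathbf{P}^{\mathsf{T}}\mathbf{x})\|$. A filter $\mathbf{h}=\{h_k\}_{k\ge0}$ defines $\mathbf{H}(\mathbf{S})=\sum_k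 h_k\mathbf{S}^k$ and frequency response $h(\lambda)=\sum_k h_k\lambda^k$ (analytic), with $|h(\lambda)|\le1$. It is integral Lipschitz with constant $C>0$ if $|h(\lambda_2)-h(\lambda_1)|\le C\,\frac{|\lambda_2-\lambda_1|}{|\lambda_1+\lambda_2|/2}$ for all $\lambda_1,\lambda_2$. $\mathcal{O}(\varepsilon^2)$ denotes a term bounded by a constant times $\varepsilon^2$. *)

theory Defs
  imports "HOL-Analysis.Analysis"
begin

type_synonym 'n sqmat = "real^'n^'n"

(* spectral norm: operator norm induced by the Euclidean norm *)
definition spec_norm :: "'n::finite sqmat \<Rightarrow> real" where
  "spec_norm A = onorm (\<lambda>x. A *v x)"

definition diag_matrix :: "'n::finite sqmat \<Rightarrow> bool" where
  "diag_matrix A \<longleftrightarrow> (\<forall>i j. i \<noteq> j \<longrightarrow> A $ i $ j = 0)"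

(* graph shift operator: real symmetric matrix *)
definition gso :: "'n::finite sqmat \<Rightarrow> bool" where
  "gso S \<longleftrightarrow> transpose S = S"

(* permutation matrix of a permutation p *)
definition perm_matrix :: "('n::finite \<Rightarrow> 'n) \<Rightarrow> 'n sqmat" where
  "perm_matrix p = (\<chi> i j. if i = p j then 1 else 0)"

definition perm_matrices :: "'n::finite sqmat set" where
  "perm_matrices = {perm_matrix p | p. p permutes (UNIV :: 'n set)}"

(* set of relative perturbation matrices modulo permutation *)
definition rel_perts :: "'n::finite sqmat \<Rightarrow> 'n sqmat \<Rightarrow> 'n sqmat set" where
  "rel_perts S Sh = {E. \<exists>P \<in> perm_matrices.
      transpose P ** Sh ** P = S + (E ** S + S ** E)}"

(* d(S, Sh) = min of ||E|| over admissible (P, E) *)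
definition rel_dist :: "'n::finite sqmat \<Rightarrow> 'n sqmat \<Rightarrow> real" where
  "rel_dist S Sh = Inf (spec_norm ` rel_perts S Sh)"

(* || A - Ah ||_P for linear operators given as matrices *)
definition perm_op_dist :: "'n::finite sqmat \<Rightarrow> 'n sqmat \<Rightarrow> real" where
  "perm_op_dist A Ah = Inf ((\<lambda>P. onorm (\<lambda>x. transpose P *v (A *v x) - Ah *v (transpose P *v x)))
                          ` perm_matrices)"

fun mat_pow :: "'n::finite sqmat \<Rightarrow> nat \<Rightarrow> 'n sqmat" where
  "mat_pow A 0 = mat 1"
| "mat_pow A (Suc k) = A ** mat_pow A k"

(* graph filter H(S) = sum_k h_k S^k *)
definition graph_filter :: "(nat \<Rightarrow> real) \<Rightarrow> 'n::finite sqmat \<Rightarrow> 'n sqmat" where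
  "graph_filter h S = (\<Sum>k. h k *\<^sub>R mat_pow S k)"

(* frequency response h(lambda) = sum_k h_k lambda^k *)
definition freq_resp :: "(nat \<Rightarrow> real) \<Rightarrow> real \<Rightarrow> real" where
  "freq_resp h x = (\<Sum>k. h k * x ^ k)"

(* integral Lipschitz with constant C; the bound is vacuous (infinite) when lambda1 + lambda2 = 0 *)
definition integral_lipschitz :: "(nat \<Rightarrow> real) \<Rightarrow> real \<Rightarrow> bool" where
  "integral_lipschitz h C \<longleftrightarrow> C > 0 \<and>
     (\<forall>l1 l2. l1 + l2 \<noteq> 0 \<longrightarrow>
        \<bar>freq_resp h l2 - freq_resp h l1\<bar> \<le> C * (\<bar>l2 - l1\<bar> / (\<bar>l1 + l2\<bar> / 2)))"

end

theory Submission
  imports Defs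
begin

lemma frob_sq: "(norm (A::real^'n^'m))^2 = (\<Sum>i\<in>UNIV. \<Sum>j\<in>UNIV. (A$i$j)^2)"
proof -
  have "(norm A)^2 = (\<Sum>i\<in>UNIV. (norm (A$i))^2)"
    unfolding norm_vec_def L2_set_def by (simp add: sum_nonneg)
  also have "\<dots> = (\<Sum>i\<in>UNIV. \<Sum>j\<in>UNIV. (A$i$j)^2)"
    unfolding norm_vec_def L2_set_def by (simp add: sum_nonneg)
  finally show ?thesis .
qed

lemma frob_transpose: "norm (transpose (A::real^'n^'m)) = norm A"
proof -
  have "(norm (transpose A))^2 = (\<Sum>i\<in>UNIV. \<Sum>j\<in>UNIV. (A$j$i)^2)"
    by (simp add: frob_sq transpose_def)
  also have "\<dots> = (\<Sum>j\<in>UNIV. \<Sum>i\<in>UNIV. (A$j$i)^2)" by (rule sum.swap)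
  also have "\<dots> = (norm A)^2" by (simp add: frob_sq)
  finally have "(norm (transpose A))^2 = (norm A)^2" .
  then show ?thesis by (simp add: power2_eq_iff_nonneg)
qed

lemma frob_mv: "norm ((A::real^'n^'m) *v x) \<le> norm A * norm x"
proof -
  have "(norm (A *v x))^2 = (\<Sum>i\<in>UNIV. (inner (A$i) x)^2)"
    unfolding norm_vec_def L2_set_def matrix_mult_dot by (simp add: sum_nonneg)
  also have "\<dots> \<le> (\<Sum>i\<in>UNIV. (norm (A$i))^2 * (norm x)^2)"
  proof (rule sum_mono)
    fix i
    have "\<bar>inner (A$i) x\<bar> \<le> norm (A$i) * norm x" by (rule Cauchy_Schwarz_ineq2)
    then have "(inner (A$i) x)^2 \<le> (norm (A$i) * norm x)^2"
      by (metis abs_ge_zero power2_abs power_mono)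
    then show "(inner (A$i) x)^2 \<le> (norm (A$i))^2 * (norm x)^2"
      by (simp add: power_mult_distrib)
  qed
  also have "\<dots> = (norm A * norm x)^2"
    unfolding norm_vec_def[of A] L2_set_def
    by (simp add: sum_nonneg sum_distrib_right power_mult_distrib)
  finally show ?thesis
    by (rule power2_le_imp_le) simp
qed

lemma frob_mult: "norm ((A::real^'n^'m) ** (B::real^'k^'n)) \<le> norm A * norm B"
proof -
  have row: "(A ** B)$i = transpose B *v (A$i)" for i
    by (simp add: vec_eq_iff matrix_matrix_mult_def vector_matrix_mult_def)
  have "(norm (A ** B))^2 = (\<Sum>i\<in>UNIV. (norm ((A**B)$i))^2)"
    unfolding norm_vec_def[of "A**B"] L2_set_def by (simp add: sum_nonneg)
  also have "\<dots> \<le> (\<Sum>i\<in>UNIV. (norm B)^2 * (norm (A$i))^2)"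
  proof (rule sum_mono)
    fix i
    have "norm ((A**B)$i) \<le> norm B * norm (A$i)"
      using frob_mv[of "transpose B" "A$i"] by (simp only: row frob_transpose)
    then show "(norm ((A**B)$i))^2 \<le> (norm B)^2 * (norm (A$i))^2"
      by (metis norm_ge_zero power_mono power_mult_distrib)
  qed
  also have "\<dots> = (norm A * norm B)^2"
    unfolding norm_vec_def[of A] L2_set_def
    by (simp add: sum_nonneg sum_distrib_left power_mult_distrib mult.commute)
  finally show ?thesis
    by (rule power2_le_imp_le) simp
qed

lemma spec_bound: "norm ((A::real^'n^'n) *v x) \<le> spec_norm A * norm x"
  unfolding spec_norm_def using onorm[OF matrix_vector_mul_bounded_linear] by blast

lemma spec_le: "(\<And>x. norm ((A::real^'n^'n) *v x) \<le> b * norm x) \<Longrightarrow> spec_norm A \<le> b"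
  unfolding spec_norm_def by (rule onorm_le)

lemma spec_nonneg: "0 \<le> spec_norm (A::real^'n^'n)"
  unfolding spec_norm_def by (rule onorm_pos_le[OF matrix_vector_mul_bounded_linear])

lemma spec_le_frob: "spec_norm (A::real^'n^'n) \<le> norm A"
  by (rule spec_le) (rule frob_mv)

lemma spec_mult: "spec_norm ((A::real^'n^'n) ** B) \<le> spec_norm A * spec_norm B"
proof (rule spec_le)
  fix x
  have "norm ((A**B) *v x) = norm (A *v (B *v x))" by (simp add: matrix_vector_mul_assoc)
  also have "\<dots> \<le> spec_norm A * norm (B *v x)" by (rule spec_bound)
  also have "\<dots> \<le> spec_norm A * (spec_norm B * norm x)"
    by (rule mult_left_mono[OF spec_bound spec_nonneg])
  finally show "norm ((A**B) *v x) \<le> spec_norm A * spec_norm B * norm x" by simp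
qed

lemma spec_add: "spec_norm ((A::real^'n^'n) + B) \<le> spec_norm A + spec_norm B"
proof (rule spec_le)
  fix x
  have "norm ((A+B) *v x) \<le> norm (A *v x) + norm (B *v x)"
    by (simp add: matrix_vector_mult_add_rdistrib norm_triangle_ineq)
  also have "\<dots> \<le> spec_norm A * norm x + spec_norm B * norm x"
    using spec_bound[of A x] spec_bound[of B x] by simp
  finally show "norm ((A+B) *v x) \<le> (spec_norm A + spec_norm B) * norm x"
    by (simp add: algebra_simps)
qed

lemma spec_minus: "spec_norm (- (A::real^'n^'n)) = spec_norm A"
proof -
  have "(*v) (-A) = (\<lambda>x. - (A *v x))"
    by (rule ext) (simp add: vec_eq_iff matrix_vector_mult_def sum_negf)
  then show ?thesis unfolding spec_norm_def by (simp add: onorm_neg)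
qed

lemma spec_diff: "spec_norm ((A::real^'n^'n) - B) \<le> spec_norm A + spec_norm B"
  using spec_add[of A "-B"] by (simp add: spec_minus)

lemma orth_norm: "orthogonal_matrix (Q::real^'n^'n) \<Longrightarrow> norm (Q *v x) = norm x"
  by (metis orthogonal_transformation_matrix orthogonal_transformation_norm
        matrix_of_matrix_vector_mul matrix_vector_mul_linear)

lemma orth_spec: "orthogonal_matrix (Q::real^'n^'n) \<Longrightarrow> spec_norm Q \<le> 1"
  by (rule spec_le) (simp add: orth_norm)

lemma orth_QQt: "orthogonal_matrix (Q::real^'n^'n) \<Longrightarrow> Q ** transpose Q = mat 1"
  by (simp add: orthogonal_matrix_def)
lemma orth_QtQ: "orthogonal_matrix (Q::real^'n^'n) \<Longrightarrow> transpose Q ** Q = mat 1"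
  by (simp add: orthogonal_matrix_def)

lemma spec_orth_left: assumes "orthogonal_matrix (Q::real^'n^'n)"
  shows "spec_norm (Q ** A) = spec_norm A"
proof (rule antisym)
  show "spec_norm (Q ** A) \<le> spec_norm A"
  proof -
    have "spec_norm Q * spec_norm A \<le> 1 * spec_norm A"
      by (rule mult_right_mono[OF orth_spec[OF assms] spec_nonneg])
    then show ?thesis using spec_mult[of Q A] by linarith
  qed
  have "A = transpose Q ** (Q ** A)" by (simp add: matrix_mul_assoc orth_QtQ[OF assms])
  then have "spec_norm A \<le> spec_norm (transpose Q) * spec_norm (Q ** A)"
    by (metis spec_mult)
  also have "\<dots> \<le> spec_norm (Q ** A)"
    using mult_right_mono[OF orth_spec[of "transpose Q"] spec_nonneg[of "Q ** A"]] assms by simp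
  finally show "spec_norm A \<le> spec_norm (Q ** A)" .
qed

lemma spec_orth_right: assumes "orthogonal_matrix (Q::real^'n^'n)"
  shows "spec_norm (A ** Q) = spec_norm A"
proof (rule antisym)
  show "spec_norm (A ** Q) \<le> spec_norm A"
  proof -
    have "spec_norm A * spec_norm Q \<le> spec_norm A * 1"
      by (rule mult_left_mono[OF orth_spec[OF assms] spec_nonneg])
    then show ?thesis using spec_mult[of A Q] by linarith
  qed
  have "A = (A ** Q) ** transpose Q" by (simp add: matrix_mul_assoc[symmetric] orth_QQt[OF assms])
  then have "spec_norm A \<le> spec_norm (A ** Q) * spec_norm (transpose Q)"
    by (metis spec_mult)
  also have "\<dots> \<le> spec_norm (A ** Q)"
    using mult_left_mono[OF orth_spec[of "transpose Q"] spec_nonneg[of "A ** Q"]] assms by simp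
  finally show "spec_norm A \<le> spec_norm (A ** Q)" .
qed

lemma spec_transpose: "spec_norm (transpose (A::real^'n^'n)) \<le> spec_norm A"
proof (rule spec_le)
  fix x :: "real^'n"
  let ?y = "transpose A *v x"
  have "(norm ?y)^2 = inner ?y ?y" by (simp add: power2_norm_eq_inner)
  also have "\<dots> = inner x (A *v ?y)"
    by (metis dot_lmul_matrix inner_commute transpose_matrix_vector)
  also have "\<dots> \<le> norm x * norm (A *v ?y)" by (rule norm_cauchy_schwarz)
  also have "\<dots> \<le> norm x * (spec_norm A * norm ?y)"
    by (rule mult_left_mono[OF spec_bound norm_ge_zero])
  finally have h: "(norm ?y)^2 \<le> (spec_norm A * norm x) * norm ?y" by (simp add: ac_simps)
  show "norm ?y \<le> spec_norm A * norm x"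
  proof (cases "norm ?y = 0")
    case True then show ?thesis using spec_nonneg[of A] by simp
  next
    case False
    then have "norm ?y > 0" by simp
    with h show ?thesis by (simp add: power2_eq_square)
  qed
qed

lemma spec_transpose_eq: "spec_norm (transpose (A::real^'n^'n)) = spec_norm A"
  using spec_transpose[of A] spec_transpose[of "transpose A"] by simp

lemma entry_le_spec: "\<bar>(A::real^'n^'n)$i$j\<bar> \<le> spec_norm A"
  unfolding spec_norm_def by (rule matrix_component_le_onorm)

lemma frob_le_spec: "norm (A::real^'n^'n) \<le> sqrt (real CARD('n)) * spec_norm A"
proof -
  have "(norm A)^2 = (norm (transpose A))^2" by (simp add: frob_transpose)
  also have "\<dots> = (\<Sum>j\<in>UNIV. (norm (column j A))^2)"
    unfolding norm_vec_def[of "transpose A"] L2_set_def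
    by (simp add: sum_nonneg row_transpose[symmetric] row_def transpose_def)
  also have "\<dots> \<le> (\<Sum>j\<in>(UNIV::'n set). (spec_norm A)^2)"
  proof (rule sum_mono)
    fix j
    show "(norm (column j A))^2 \<le> (spec_norm A)^2"
      using norm_column_le_onorm[of j A] unfolding spec_norm_def
      by (metis norm_ge_zero power_mono)
  qed
  also have "\<dots> = (sqrt (real CARD('n)) * spec_norm A)^2"
    by (simp add: power_mult_distrib)
  finally show ?thesis
    by (rule power2_le_imp_le) (simp add: spec_nonneg)
qed

lemma diag_spec: assumes "diag_matrix (D::real^'n^'n)" "\<And>i. \<bar>D$i$i\<bar> \<le> m"
  shows "spec_norm D \<le> m"
proof (rule spec_le)
  fix x :: "real^'n"
  have Dx: "(D *v x)$i = D$i$i * x$i" for i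
    using assms(1) unfolding diag_matrix_def matrix_vector_mult_def
    by (simp add: sum.remove[of UNIV i] sum.neutral)
  have m0: "0 \<le> m" using assms(2) abs_ge_zero order_trans by blast
  have "(norm (D *v x))^2 = (\<Sum>i\<in>UNIV. (D$i$i * x$i)^2)"
    unfolding norm_vec_def L2_set_def by (simp add: sum_nonneg Dx)
  also have "\<dots> \<le> (\<Sum>i\<in>UNIV. m^2 * (x$i)^2)"
  proof (rule sum_mono)
    fix i
    have "(D$i$i)^2 \<le> m^2" using assms(2)[of i] m0
      by (metis abs_ge_zero power2_abs power_mono)
    then show "(D$i$i * x$i)^2 \<le> m^2 * (x$i)^2"
      by (simp add: power_mult_distrib mult_right_mono)
  qed
  also have "\<dots> = (m * norm x)^2"
    unfolding norm_vec_def L2_set_def by (simp add: sum_nonneg sum_distrib_left power_mult_distrib)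
  finally show "norm (D *v x) \<le> m * norm x"
    by (rule power2_le_imp_le) (simp add: m0)
qed

lemma schur_frob: assumes "\<And>i j. \<bar>G i j\<bar> \<le> g"
  shows "norm ((\<chi> i j. G i j * (X::real^'n^'m)$i$j) :: real^'n^'m) \<le> g * norm X"
proof -
  have g0: "0 \<le> g" using assms abs_ge_zero order_trans by blast
  have "(norm ((\<chi> i j. G i j * X$i$j) :: real^'n^'m))^2 = (\<Sum>i\<in>UNIV. \<Sum>j\<in>UNIV. (G i j * X$i$j)^2)"
    by (simp add: frob_sq)
  also have "\<dots> \<le> (\<Sum>i\<in>UNIV. \<Sum>j\<in>UNIV. g^2 * (X$i$j)^2)"
  proof (intro sum_mono)
    fix i j
    have "(G i j)^2 \<le> g^2" using assms[of i j] g0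
      by (metis abs_ge_zero power2_abs power_mono)
    then show "(G i j * X$i$j)^2 \<le> g^2 * (X$i$j)^2"
      by (simp add: power_mult_distrib mult_right_mono)
  qed
  also have "\<dots> = (g * norm X)^2"
    by (simp add: frob_sq power_mult_distrib sum_distrib_left)
  finally show ?thesis
    by (rule power2_le_imp_le) (simp add: g0)
qed

lemma mm_add_right: "((A::real^'n^'m) + B) ** (C::real^'k^'n) = A ** C + B ** C"
  by (simp add: matrix_matrix_mult_def vec_eq_iff sum.distrib distrib_right)
lemma mm_diff_right: "((A::real^'n^'m) - B) ** (C::real^'k^'n) = A ** C - B ** C"
  by (simp add: matrix_matrix_mult_def vec_eq_iff sum_subtractf left_diff_distrib)
lemma mm_diff_left: "(C::real^'n^'m) ** ((A::real^'k^'n) - B) = C ** A - C ** B"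
  by (simp add: matrix_matrix_mult_def vec_eq_iff sum_subtractf right_diff_distrib)

abbreviation "n1 \<equiv> norm (mat 1 :: real^'n^'n)"

lemma mat_pow_frob: "norm (mat_pow (A::real^'n^'n) k) \<le> norm (mat 1 :: real^'n^'n) * norm A ^ k"
proof (induction k)
  case 0 then show ?case by simp
next
  case (Suc k)
  have "norm (mat_pow A (Suc k)) \<le> norm A * norm (mat_pow A k)"
    by (simp add: frob_mult)
  also have "\<dots> \<le> norm A * (norm (mat 1 :: real^'n^'n) * norm A ^ k)"
    by (rule mult_left_mono[OF Suc norm_ge_zero])
  finally show ?case by (simp add: ac_simps)
qed

lemma abs_summ:
  assumes "\<forall>x. summable (\<lambda>k. h k * x ^ k)" "0 \<le> (r::real)"
  shows "summable (\<lambda>k. \<bar>h k\<bar> * r ^ k)"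
proof -
  have "summable (\<lambda>k. norm (h k * r ^ k))"
    by (rule powser_insidea[of h "r+1"]) (use assms in auto)
  then show ?thesis using assms(2) by (simp add: abs_mult)
qed

lemma nat_sq_le: "(real k)^2 \<le> 4 ^ k"
proof -
  have "real k \<le> 2 ^ k" using less_exp[of k]
    by (metis of_nat_le_iff of_nat_numeral of_nat_power less_imp_le)
  then have "(real k)^2 \<le> (2^k)^2" by (simp add: power_mono)
  also have "\<dots> = (2^2)^k" by (metis power_mult mult.commute)
  also have "\<dots> = 4 ^ k" by simp
  finally show ?thesis .
qed

lemma abs_summ2:
  assumes "\<forall>x. summable (\<lambda>k. h k * x ^ k)" "0 \<le> (r::real)"
  shows "summable (\<lambda>k. \<bar>h k\<bar> * (real k)^2 * r ^ k)"
proof (rule summable_comparison_test')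
  show "summable (\<lambda>k. \<bar>h k\<bar> * (4*r) ^ k)" using abs_summ[OF assms(1), of "4*r"] assms(2) by simp
  fix k :: nat
  have "\<bar>h k\<bar> * (real k)^2 * r ^ k \<le> \<bar>h k\<bar> * 4^k * r ^ k"
    using nat_sq_le[of k] assms(2) by (simp add: mult_right_mono mult_left_mono)
  then show "norm (\<bar>h k\<bar> * (real k)^2 * r ^ k) \<le> \<bar>h k\<bar> * (4*r) ^ k"
    using assms(2) by (simp add: power_mult_distrib ac_simps)
qed

lemma abs_summ1:
  assumes "\<forall>x. summable (\<lambda>k. h k * x ^ k)" "0 \<le> (r::real)"
  shows "summable (\<lambda>k. \<bar>h k\<bar> * real k * r ^ k)"
proof (rule summable_comparison_test')
  show "summable (\<lambda>k. \<bar>h k\<bar> * (real k)^2 * r ^ k)" using abs_summ2[OF assms] .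
  fix k :: nat
  have "real k \<le> (real k)^2" by (cases k) (auto simp: power2_eq_square)
  then show "norm (\<bar>h k\<bar> * real k * r ^ k) \<le> \<bar>h k\<bar> * (real k)^2 * r ^ k"
    using assms(2) by (simp add: mult_right_mono mult_left_mono)
qed

lemma gf_summable:
  assumes "\<forall>x. summable (\<lambda>k. h k * x ^ k)"
  shows "summable (\<lambda>k. h k *\<^sub>R mat_pow (A::real^'n^'n) k)"
proof (rule summable_comparison_test')
  show "summable (\<lambda>k. norm (mat 1 :: real^'n^'n) * (\<bar>h k\<bar> * norm A ^ k))"
    by (rule summable_mult) (rule abs_summ[OF assms norm_ge_zero])
  fix k
  show "norm (h k *\<^sub>R mat_pow A k) \<le> norm (mat 1 :: real^'n^'n) * (\<bar>h k\<bar> * norm A ^ k)"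
    using mat_pow_frob[of A k] by (simp add: mult_left_mono ac_simps)
qed

lemma conj_bl: "bounded_linear (\<lambda>X::real^'n^'n. Q ** X ** R)"
proof (rule bounded_linear_intro[where K = "norm Q * norm R"])
  show "Q ** (x + y) ** R = Q ** x ** R + Q ** y ** R" for x y
    by (simp add: matrix_add_ldistrib mm_add_right)
  show "Q ** (r *\<^sub>R x) ** R = r *\<^sub>R (Q ** x ** R)" for r x
    by (simp add: matrix_scalar_ac scalar_matrix_assoc)
  show "norm (Q ** x ** R) \<le> norm x * (norm Q * norm R)" for x
  proof -
    have "norm (Q ** x ** R) \<le> norm (Q ** x) * norm R" by (rule frob_mult)
    also have "\<dots> \<le> norm Q * norm x * norm R" by (rule mult_right_mono[OF frob_mult norm_ge_zero])
    finally show ?thesis by (simp add: ac_simps)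
  qed
qed

lemma mat_pow_conj: assumes "orthogonal_matrix (Q::real^'n^'n)"
  shows "mat_pow (Q ** A ** transpose Q) k = Q ** mat_pow A k ** transpose Q"
proof (induction k)
  case 0 then show ?case using orth_QQt[OF assms] by simp
next
  case (Suc k)
  have "mat_pow (Q ** A ** transpose Q) (Suc k) = (Q ** A ** transpose Q) ** (Q ** mat_pow A k ** transpose Q)"
    using Suc by simp
  also have "\<dots> = Q ** A ** (transpose Q ** Q) ** mat_pow A k ** transpose Q"
    by (simp add: matrix_mul_assoc)
  also have "\<dots> = Q ** mat_pow A (Suc k) ** transpose Q"
    by (simp add: orth_QtQ[OF assms] matrix_mul_assoc)
  finally show ?case .
qed

lemma gf_conj:
  assumes "\<forall>x. summable (\<lambda>k. h k * x ^ k)" "orthogonal_matrix (Q::real^'n^'n)"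
  shows "graph_filter h (Q ** A ** transpose Q) = Q ** graph_filter h A ** transpose Q"
proof -
  have "Q ** graph_filter h A ** transpose Q = (\<Sum>k. Q ** (h k *\<^sub>R mat_pow A k) ** transpose Q)"
    unfolding graph_filter_def
    by (rule bounded_linear.suminf[OF conj_bl gf_summable[OF assms(1)]])
  also have "\<dots> = (\<Sum>k. h k *\<^sub>R mat_pow (Q ** A ** transpose Q) k)"
    by (simp add: mat_pow_conj[OF assms(2)] matrix_scalar_ac scalar_matrix_assoc)
  finally show ?thesis unfolding graph_filter_def by simp
qed

lemma entry_bl: "bounded_linear (\<lambda>X::real^'n^'m. X $ i $ j)"
  using bounded_linear_compose[OF bounded_linear_vec_nth[of j] bounded_linear_vec_nth[of i]]
  by (simp add: o_def)

lemma entry_suminf: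
  assumes "summable (X :: nat \<Rightarrow> real^'n^'m)"
  shows "(\<Sum>k. X k) $ i $ j = (\<Sum>k. X k $ i $ j)"
  by (rule bounded_linear.suminf[OF entry_bl assms])

lemma mat_pow_diag: assumes "diag_matrix (D::real^'n^'n)"
  shows "mat_pow D k = (\<chi> i j. if i = j then (D$i$i)^k else 0)"
proof (induction k)
  case 0 then show ?case by (simp add: mat_def vec_eq_iff)
next
  case (Suc k)
  have Dz: "i \<noteq> j \<Longrightarrow> D$i$j = 0" for i j
    using assms unfolding diag_matrix_def by auto
  have "mat_pow D (Suc k) $ i $ j = (if i = j then (D$i$i)^(Suc k) else 0)" for i j
  proof -
    have "mat_pow D (Suc k) $ i $ j = (\<Sum>l\<in>UNIV. D$i$l * mat_pow D k $ l $ j)"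
      by (simp add: matrix_matrix_mult_def)
    also have "\<dots> = D$i$i * mat_pow D k $ i $ j"
      by (subst sum.remove[of UNIV i]) (auto intro!: sum.neutral simp: Dz)
    finally show ?thesis by (simp add: Suc)
  qed
  then show ?case by (simp add: vec_eq_iff)
qed

lemma gf_diag:
  assumes "\<forall>x. summable (\<lambda>k. h k * x ^ k)" "diag_matrix (D::real^'n^'n)"
  shows "graph_filter h D = (\<chi> i j. if i = j then freq_resp h (D$i$i) else 0)"
proof -
  have "graph_filter h D $ i $ j = (if i = j then freq_resp h (D$i$i) else 0)" for i j
    unfolding graph_filter_def entry_suminf[OF gf_summable[OF assms(1)]]
    by (simp add: mat_pow_diag[OF assms(2)] freq_resp_def)
  then show ?thesis by (simp add: vec_eq_iff)
qed

lemma sym_inner: assumes "transpose A = (A::real^'n^'n)"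
  shows "inner (A *v x) y = inner x (A *v y)"
proof -
  have "A *v x = x v* A" using transpose_matrix_vector[of A x] assms by simp
  then show ?thesis by (simp add: dot_lmul_matrix)
qed

lemma q_scale: "inner (c *\<^sub>R z) ((A::real^'n^'n) *v (c *\<^sub>R z)) = c^2 * inner z (A *v z)"
  by (simp add: matrix_vector_mult_scaleR power2_eq_square)

lemma small_pos_contra:
  fixes a c :: real
  assumes "a > 0" "\<And>t. t > 0 \<Longrightarrow> 2 * a \<le> t * c"
  shows False
proof -
  define t where "t = a / (\<bar>c\<bar> + 1)"
  have t0: "t > 0" using assms(1) by (simp add: t_def)
  have "t * c \<le> t * \<bar>c\<bar>" using t0 by (simp add: mult_left_mono)
  also have "\<dots> < a" unfolding t_def using assms(1)
    by (simp add: field_simps)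
  finally show False using assms(2)[OF t0] assms(1) by linarith
qed

lemma spectral_sub:
  fixes A :: "real^'n^'n"
  assumes sym: "transpose A = A"
  shows "subspace W \<Longrightarrow> (\<forall>x\<in>W. A *v x \<in> W) \<Longrightarrow>
    \<exists>B. B \<subseteq> W \<and> pairwise orthogonal B \<and> (\<forall>b\<in>B. norm b = 1 \<and> A *v b = inner b (A *v b) *\<^sub>R b) \<and> span B = W"
proof (induction "dim W" arbitrary: W rule: less_induct)
  case less
  note W = less.prems(1) and inv = less.prems(2)
  show ?case
  proof (cases "\<exists>x\<in>W. x \<noteq> 0")
    case False
    then have "W = {0}" using subspace_0[OF W] by auto
    then show ?thesis by (intro exI[of _ "{}"]) auto
  next
    case True
    then obtain x1 where x1: "x1 \<in> W" "x1 \<noteq> 0" by blast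
    define K where "K = W \<inter> sphere 0 1"
    define q where "q = (\<lambda>z. inner z (A *v z))"
    have "compact (sphere (0::real^'n) 1 \<inter> W)"
      by (rule compact_Int_closed[OF compact_sphere closed_subspace[OF W]])
    then have "compact K" unfolding K_def by (simp add: Int_commute)
    moreover have "K \<noteq> {}"
    proof -
      have "x1 /\<^sub>R norm x1 \<in> K" unfolding K_def using x1 W
        by (simp add: subspace_scale)
      then show ?thesis by blast
    qed
    moreover have "continuous_on K q" unfolding q_def
      by (intro continuous_intros)
    ultimately obtain x0 where x0K: "x0 \<in> K" and x0max: "\<And>y. y \<in> K \<Longrightarrow> q y \<le> q x0"
      using continuous_attains_sup[of K q] by blast
    have x0W: "x0 \<in> W" and nx0: "norm x0 = 1" using x0K unfolding K_def by auto
    define \<mu> where "\<mu> = q x0"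
    have qle: "q z \<le> \<mu> * (norm z)^2" if "z \<in> W" for z
    proof (cases "z = 0")
      case True then show ?thesis by (simp add: q_def)
    next
      case False
      have "z /\<^sub>R norm z \<in> K" unfolding K_def using that False W
        by (simp add: subspace_scale)
      then have a: "q (z /\<^sub>R norm z) \<le> \<mu>" unfolding \<mu>_def by (rule x0max)
      have b: "q (z /\<^sub>R norm z) = q z / (norm z)^2"
        unfolding q_def by (simp only: q_scale) (simp add: power2_eq_square field_simps)
      have "q z = (norm z)^2 * q (z /\<^sub>R norm z)" using False by (simp add: b)
      also have "\<dots> \<le> (norm z)^2 * \<mu>" by (rule mult_left_mono[OF a]) simp
      finally show ?thesis by (simp add: mult.commute)
    qed
    define y where "y = A *v x0 - \<mu> *\<^sub>R x0"
    have yW: "y \<in> W" unfolding y_def using inv x0W W by (simp add: subspace_diff subspace_scale)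
    have "inner x0 x0 = 1" using nx0 by (simp add: dot_square_norm)
    have "inner y x0 = inner (A *v x0) x0 - \<mu> * inner x0 x0" by (simp add: y_def inner_diff_left)
    also have "\<dots> = 0" using \<open>inner x0 x0 = 1\<close> by (simp add: \<mu>_def q_def inner_commute)
    finally have yx0: "inner y x0 = 0" .
    have yAx0: "inner y (A *v x0) = (norm y)^2"
    proof -
      have "A *v x0 = y + \<mu> *\<^sub>R x0" by (simp add: y_def)
      then show ?thesis by (simp add: inner_add_right yx0 power2_norm_eq_inner)
    qed
    have x0Ay: "inner x0 (A *v y) = (norm y)^2"
      using yAx0 sym_inner[OF sym, of x0 y] by (simp add: inner_commute)
    have "y = 0"
    proof (rule ccontr)
      assume "y \<noteq> 0"
      then have ny: "(norm y)^2 > 0" by simp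
      show False
      proof (rule small_pos_contra[OF ny])
        fix t :: real assume t0: "t > 0"
        have zW: "x0 + t *\<^sub>R y \<in> W" using x0W yW W by (simp add: subspace_add subspace_scale)
        have "q (x0 + t *\<^sub>R y) = \<mu> + 2 * t * (norm y)^2 + t^2 * q y"
          unfolding q_def \<mu>_def
          by (simp add: matrix_vector_right_distrib matrix_vector_mult_scaleR inner_add_left
               inner_add_right yAx0 x0Ay power2_eq_square algebra_simps)
        moreover have "(norm (x0 + t *\<^sub>R y))^2 = 1 + t^2 * (norm y)^2"
        proof -
          have "(norm (x0 + t *\<^sub>R y))^2 = inner (x0 + t *\<^sub>R y) (x0 + t *\<^sub>R y)"
            by (rule power2_norm_eq_inner)
          also have "\<dots> = inner x0 x0 + 2 * t * inner y x0 + t^2 * inner y y"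
            by (simp add: inner_add_left inner_add_right inner_commute power2_eq_square algebra_simps)
          also have "\<dots> = 1 + t^2 * (norm y)^2"
            using \<open>inner x0 x0 = 1\<close> yx0 by (simp add: power2_norm_eq_inner)
          finally show ?thesis .
        qed
        ultimately have "\<mu> + 2 * t * (norm y)^2 + t^2 * q y \<le> \<mu> * (1 + t^2 * (norm y)^2)"
          using qle[OF zW] by simp
        then have "t * (2 * (norm y)^2) \<le> t * (t * (\<mu> * (norm y)^2 - q y))"
          by (simp add: power2_eq_square algebra_simps)
        then show "2 * (norm y)^2 \<le> t * (\<mu> * (norm y)^2 - q y)"
          using t0 by simp
      qed
    qed
    then have eig: "A *v x0 = \<mu> *\<^sub>R x0" unfolding y_def by simp
    define W' where "W' = {z\<in>W. inner z x0 = 0}"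
    have W'sub: "subspace W'" unfolding W'_def subspace_def
      using W by (auto simp: subspace_0 subspace_add subspace_scale inner_add_left)
    have W'inv: "\<forall>x\<in>W'. A *v x \<in> W'"
    proof
      fix z assume "z \<in> W'"
      then have "z \<in> W" "inner z x0 = 0" unfolding W'_def by auto
      moreover have "inner (A *v z) x0 = inner z (A *v x0)" by (rule sym_inner[OF sym])
      ultimately show "A *v z \<in> W'" unfolding W'_def using inv eig by simp
    qed
    have "W' \<subset> W"
    proof -
      have "x0 \<notin> W'" unfolding W'_def using \<open>inner x0 x0 = 1\<close> by simp
      moreover have "W' \<subseteq> W" unfolding W'_def by auto
      ultimately show ?thesis using x0W by blast
    qed
    then have "dim W' < dim W"
      using subspace_dim_equal[OF W'sub W] dim_subset[of W' W] by fastforce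
    from less.hyps[OF this W'sub W'inv] obtain B' where
      B': "B' \<subseteq> W'" "pairwise orthogonal B'"
          "\<forall>b\<in>B'. norm b = 1 \<and> A *v b = inner b (A *v b) *\<^sub>R b" "span B' = W'"
      by blast
    show ?thesis
    proof (intro exI[of _ "insert x0 B'"] conjI)
      show "insert x0 B' \<subseteq> W" using B'(1) x0W unfolding W'_def by blast
      have "\<forall>y\<in>B'. inner y x0 = 0" using B'(1) unfolding W'_def by blast
      then show "pairwise orthogonal (insert x0 B')"
        by (simp add: pairwise_insert B'(2)) (auto simp: orthogonal_def inner_commute)
      have "inner x0 (A *v x0) = \<mu>" by (simp add: \<mu>_def q_def)
      then have "norm x0 = 1 \<and> A *v x0 = inner x0 (A *v x0) *\<^sub>R x0" using nx0 eig by simp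
      then show "\<forall>b\<in>insert x0 B'. norm b = 1 \<and> A *v b = inner b (A *v b) *\<^sub>R b"
        using B'(3) by blast
      show "span (insert x0 B') = W"
      proof
        have "insert x0 B' \<subseteq> W" using B'(1) x0W unfolding W'_def by blast
        then show "span (insert x0 B') \<subseteq> W" using W by (rule span_minimal)
        show "W \<subseteq> span (insert x0 B')"
        proof
          fix w assume wW: "w \<in> W"
          define w' where "w' = w - inner w x0 *\<^sub>R x0"
          have "w' \<in> W'" unfolding W'_def w'_def using wW x0W W \<open>inner x0 x0 = 1\<close>
            by (simp add: subspace_diff subspace_scale inner_diff_left)
          then have "w' \<in> span (insert x0 B')" using B'(4) span_mono[of B' "insert x0 B'"] by auto
          moreover have "inner w x0 *\<^sub>R x0 \<in> span (insert x0 B')"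
            by (simp add: span_base span_scale)
          ultimately have "w' + inner w x0 *\<^sub>R x0 \<in> span (insert x0 B')" by (rule span_add)
          then show "w \<in> span (insert x0 B')" by (simp add: w'_def)
        qed
      qed
    qed
  qed
qed

lemma spectral:
  fixes A :: "real^'n^'n"
  assumes sym: "transpose A = A"
  shows "\<exists>Q D. orthogonal_matrix Q \<and> diag_matrix D \<and> A = Q ** D ** transpose Q"
proof -
  obtain B where B: "pairwise orthogonal B" "\<forall>b\<in>B. norm b = 1 \<and> A *v b = inner b (A *v b) *\<^sub>R b"
      "span B = UNIV"
    using spectral_sub[OF sym, of UNIV] by auto
  have "0 \<notin> B" using B(2) by auto
  then have ind: "independent B" by (rule pairwise_orthogonal_independent[OF B(1)])
  then have finB: "finite B" by (rule independent_imp_finite)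
  have "card B = CARD('n)"
    using dim_span_eq_card_independent[OF ind] B(3) by simp
  then obtain f where f: "bij_betw f (UNIV::'n set) B"
    using finite_same_card_bij[of "UNIV::'n set" B] finB by auto
  have fB: "f j \<in> B" for j using f by (auto simp: bij_betw_def)
  have finj: "f i = f j \<Longrightarrow> i = j" for i j using f by (auto simp: bij_betw_def inj_def)
  define Q where "Q = ((\<chi> i j. f j $ i) :: real^'n^'n)"
  define \<mu> where "\<mu> = (\<lambda>j. inner (f j) (A *v f j))"
  define D where "D = ((\<chi> i j. if i = j then \<mu> j else 0) :: real^'n^'n)"
  have col: "column j Q = f j" for j by (simp add: Q_def column_def vec_eq_iff)
  have oQ: "orthogonal_matrix Q"
  proof -
    have "\<forall>i. norm (f i) = 1" using B(2) fB by auto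
    moreover have "\<forall>i j. i \<noteq> j \<longrightarrow> orthogonal (f i) (f j)"
      using B(1) fB finj unfolding pairwise_def by metis
    ultimately show ?thesis unfolding orthogonal_matrix_orthonormal_columns col by simp
  qed
  have dD: "diag_matrix D" unfolding D_def diag_matrix_def by simp
  have AQ: "A ** Q = Q ** D"
  proof -
    have "(A ** Q) $ i $ j = (Q ** D) $ i $ j" for i j
    proof -
      have "(A ** Q) $ i $ j = (A *v f j) $ i"
        by (simp add: matrix_matrix_mult_def matrix_vector_mult_def Q_def)
      also have "\<dots> = \<mu> j * f j $ i"
      proof -
        have "A *v f j = \<mu> j *\<^sub>R f j" using B(2) fB[of j] unfolding \<mu>_def by blast
        then show ?thesis by simp
      qed
      also have "\<dots> = (Q ** D) $ i $ j"
        unfolding matrix_matrix_mult_def D_def Q_def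
        by (simp add: if_distrib if_distribR sum.delta' cong: if_cong)
      finally show ?thesis .
    qed
    then show ?thesis by (simp add: vec_eq_iff)
  qed
  have "A = A ** (Q ** transpose Q)" by (simp add: orth_QQt[OF oQ])
  also have "\<dots> = Q ** D ** transpose Q" by (simp add: matrix_mul_assoc AQ)
  finally show ?thesis using oQ dD by blast
qed

lemma gf_sym_bound:
  assumes "\<forall>x. summable (\<lambda>k. h k * x ^ k)" "\<forall>x. \<bar>freq_resp h x\<bar> \<le> 1"
    and "transpose X = (X::real^'n^'n)"
  shows "spec_norm (graph_filter h X) \<le> 1"
proof -
  obtain Q D where QD: "orthogonal_matrix Q" "diag_matrix D" "X = Q ** D ** transpose Q"
    using spectral[OF assms(3)] by blast
  have "graph_filter h X = Q ** graph_filter h D ** transpose Q"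
    using gf_conj[OF assms(1) QD(1)] QD(3) by simp
  then have "spec_norm (graph_filter h X) = spec_norm (graph_filter h D)"
    using spec_orth_right[of "transpose Q" "Q ** graph_filter h D"] spec_orth_left[OF QD(1)] QD(1)
    by simp
  also have "\<dots> \<le> 1"
    unfolding gf_diag[OF assms(1) QD(2)]
    by (rule diag_spec) (use assms(2) in \<open>auto simp: diag_matrix_def\<close>)
  finally show ?thesis .
qed

fun lterm :: "real^'n^'n \<Rightarrow> real^'n^'n \<Rightarrow> nat \<Rightarrow> real^'n^'n" where
  "lterm S D 0 = 0"
| "lterm S D (Suc k) = S ** lterm S D k + D ** mat_pow S k"

fun sig :: "real \<Rightarrow> real \<Rightarrow> nat \<Rightarrow> real" where
  "sig a b 0 = 0"
| "sig a b (Suc k) = a * sig a b k + b ^ k"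

lemma orth_cancel1: "orthogonal_matrix (V::real^'n^'n) \<Longrightarrow> X ** transpose V ** V = X"
  by (simp add: matrix_mul_assoc[symmetric] orth_QtQ)
lemma orth_cancel2: "orthogonal_matrix (V::real^'n^'n) \<Longrightarrow> X ** V ** transpose V = X"
  by (simp add: matrix_mul_assoc[symmetric] orth_QQt)

lemma diag_left: "diag_matrix (L::real^'n^'n) \<Longrightarrow> (L ** X) $ a $ b = L$a$a * X$a$b"
  unfolding matrix_matrix_mult_def diag_matrix_def
  by (simp, subst sum.remove[of UNIV a]) (auto intro!: sum.neutral)

lemma diag_right: "diag_matrix (L::real^'n^'n) \<Longrightarrow> (X ** L) $ a $ b = X$a$b * L$b$b"
  unfolding matrix_matrix_mult_def diag_matrix_def
  by (simp, subst sum.remove[of UNIV b]) (auto intro!: sum.neutral)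

lemma mat_pow_norm_R:
  assumes "norm (A::real^'n^'n) \<le> R"
  shows "norm (mat_pow A k) \<le> norm (mat 1 :: real^'n^'n) * R^k"
proof -
  have "norm A ^ k \<le> R ^ k" by (rule power_mono[OF assms norm_ge_zero])
  then show ?thesis using mat_pow_frob[of A k] by (meson mult_left_mono norm_ge_zero order_trans)
qed

lemma pert_bounds:
  fixes S D :: "real^'n^'n"
  assumes R: "norm S + norm D \<le> R" "1 \<le> R"
  shows "norm (mat_pow (S+D) k - mat_pow S k) \<le> norm (mat 1 :: real^'n^'n) * k * R^k * norm D
       \<and> norm (lterm S D k) \<le> norm (mat 1 :: real^'n^'n) * k * R^k * norm D
       \<and> norm (mat_pow (S+D) k - mat_pow S k - lterm S D k) \<le> norm (mat 1 :: real^'n^'n) * (real k)^2 * R^k * (norm D)^2"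
proof (induction k)
  case 0 then show ?case by simp
next
  case (Suc k)
  define c where "c = norm (mat 1 :: real^'n^'n)"
  define d where "d = norm D"
  define s where "s = norm S"
  define P where "P = mat_pow (S+D) k"
  define Q where "Q = mat_pow S k"
  define L where "L = lterm S D k"
  have c0: "0 \<le> c" and d0: "0 \<le> d" and s0: "0 \<le> s" unfolding c_def d_def s_def by auto
  have sR: "s \<le> R" using R(1) norm_ge_zero[of D] unfolding s_def by linarith
  have dR: "d \<le> R" using R(1) norm_ge_zero[of S] unfolding d_def by linarith
  have R0: "0 \<le> R" using R by simp
  have Rk: "R^k \<le> R^Suc k" using R(2) by (simp add: power_increasing)
  have Rk0: "0 \<le> R^k" using R0 by simp
  have IH1: "norm (P - Q) \<le> c * k * R^k * d" and IH2: "norm L \<le> c * k * R^k * d"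
    and IH3: "norm (P - Q - L) \<le> c * (real k)^2 * R^k * d^2"
    using Suc.IH unfolding c_def d_def P_def Q_def L_def by auto
  have nP: "norm P \<le> c * R^k" unfolding P_def c_def
    by (rule mat_pow_norm_R) (use R norm_triangle_ineq[of S D] in linarith)
  have nQ: "norm Q \<le> c * R^k" unfolding Q_def c_def
    by (rule mat_pow_norm_R) (use sR in \<open>simp add: s_def\<close>)
  have A0: "0 \<le> c * k * R^k * d" using c0 d0 Rk0 by simp
  (* part 1 *)
  have e1: "mat_pow (S+D) (Suc k) - mat_pow S (Suc k) = S ** (P - Q) + D ** P"
    by (simp add: P_def Q_def mm_add_right mm_diff_left)
  have "norm (S ** (P - Q) + D ** P) \<le> s * (c * k * R^k * d) + d * (c * R^k)"
  proof -
    have "norm (S ** (P - Q)) \<le> s * norm (P - Q)" unfolding s_def by (rule frob_mult)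
    also have "\<dots> \<le> s * (c * k * R^k * d)" by (rule mult_left_mono[OF IH1 s0])
    finally have a: "norm (S ** (P - Q)) \<le> s * (c * k * R^k * d)" .
    have "norm (D ** P) \<le> d * norm P" unfolding d_def by (rule frob_mult)
    also have "\<dots> \<le> d * (c * R^k)" by (rule mult_left_mono[OF nP d0])
    finally have b: "norm (D ** P) \<le> d * (c * R^k)" .
    show ?thesis using a b norm_triangle_ineq[of "S ** (P - Q)" "D ** P"] by linarith
  qed
  also have "\<dots> \<le> R * (c * k * R^k * d) + d * (c * R^Suc k)"
    using mult_right_mono[OF sR A0] mult_left_mono[OF mult_left_mono[OF Rk c0] d0] by linarith
  also have "\<dots> = c * real (Suc k) * R ^ Suc k * d" by (simp add: algebra_simps)
  finally have p1: "norm (mat_pow (S+D) (Suc k) - mat_pow S (Suc k)) \<le> c * real (Suc k) * R ^ Suc k * d"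
    using e1 by simp
  (* part 2 *)
  have "norm (lterm S D (Suc k)) \<le> s * (c * k * R^k * d) + d * (c * R^k)"
  proof -
    have "norm (S ** L) \<le> s * norm L" unfolding s_def by (rule frob_mult)
    also have "\<dots> \<le> s * (c * k * R^k * d)" by (rule mult_left_mono[OF IH2 s0])
    finally have a: "norm (S ** L) \<le> s * (c * k * R^k * d)" .
    have "norm (D ** Q) \<le> d * norm Q" unfolding d_def by (rule frob_mult)
    also have "\<dots> \<le> d * (c * R^k)" by (rule mult_left_mono[OF nQ d0])
    finally have b: "norm (D ** Q) \<le> d * (c * R^k)" .
    show ?thesis using a b norm_triangle_ineq[of "S ** L" "D ** Q"] by (simp add: L_def Q_def)
  qed
  also have "\<dots> \<le> R * (c * k * R^k * d) + d * (c * R^Suc k)"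
    using mult_right_mono[OF sR A0] mult_left_mono[OF mult_left_mono[OF Rk c0] d0] by linarith
  also have "\<dots> = c * real (Suc k) * R ^ Suc k * d" by (simp add: algebra_simps)
  finally have p2: "norm (lterm S D (Suc k)) \<le> c * real (Suc k) * R ^ Suc k * d" .
  (* part 3 *)
  have e3: "mat_pow (S+D) (Suc k) - mat_pow S (Suc k) - lterm S D (Suc k) = S ** (P - Q - L) + D ** (P - Q)"
    by (simp add: P_def Q_def L_def mm_add_right mm_diff_left matrix_add_ldistrib algebra_simps)
  have A3: "0 \<le> c * (real k)^2 * R^k * d^2" using c0 Rk0 by simp
  have "norm (S ** (P - Q - L) + D ** (P - Q)) \<le> s * (c * (real k)^2 * R^k * d^2) + d * (c * k * R^k * d)"
  proof -
    have "norm (S ** (P - Q - L)) \<le> s * norm (P - Q - L)" unfolding s_def by (rule frob_mult)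
    also have "\<dots> \<le> s * (c * (real k)^2 * R^k * d^2)" by (rule mult_left_mono[OF IH3 s0])
    finally have a: "norm (S ** (P - Q - L)) \<le> s * (c * (real k)^2 * R^k * d^2)" .
    have "norm (D ** (P - Q)) \<le> d * norm (P - Q)" unfolding d_def by (rule frob_mult)
    also have "\<dots> \<le> d * (c * k * R^k * d)" by (rule mult_left_mono[OF IH1 d0])
    finally have b: "norm (D ** (P - Q)) \<le> d * (c * k * R^k * d)" .
    show ?thesis using a b norm_triangle_ineq[of "S ** (P - Q - L)" "D ** (P - Q)"] by linarith
  qed
  also have "\<dots> \<le> R * (c * (real k)^2 * R^k * d^2) + c * k * R^Suc k * d^2"
  proof -
    have "d * (c * k * R^k * d) = (c * k * d^2) * R^k" by (simp add: power2_eq_square algebra_simps)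
    also have "\<dots> \<le> (c * k * d^2) * R^Suc k" by (rule mult_left_mono[OF Rk]) (use c0 in simp)
    finally show ?thesis using mult_right_mono[OF sR A3] by (simp add: algebra_simps)
  qed
  also have "\<dots> \<le> c * (real (Suc k))^2 * R ^ Suc k * d^2"
  proof -
    have "R * (c * (real k)^2 * R^k * d^2) + c * k * R^Suc k * d^2 = c * ((real k)^2 + k) * R ^ Suc k * d^2"
      by (simp add: algebra_simps)
    also have "\<dots> \<le> c * (real (Suc k))^2 * R ^ Suc k * d^2"
      using c0 R0 by (intro mult_right_mono mult_left_mono) (auto simp: power2_eq_square algebra_simps)
    finally show ?thesis .
  qed
  finally have p3: "norm (mat_pow (S+D) (Suc k) - mat_pow S (Suc k) - lterm S D (Suc k))
      \<le> c * (real (Suc k))^2 * R ^ Suc k * d^2"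
    using e3 by simp
  show ?case using p1 p2 p3 unfolding c_def d_def by simp
qed

lemma lterm_conj:
  fixes S D V Lam :: "real^'n^'n"
  assumes oV: "orthogonal_matrix V" and dL: "diag_matrix Lam" and S: "S = V ** Lam ** transpose V"
  shows "(transpose V ** lterm S D k ** V) $ a $ b
        = (transpose V ** D ** V) $ a $ b * sig (Lam$a$a) (Lam$b$b) k"
proof (induction k arbitrary: a b)
  case 0 then show ?case by simp
next
  case (Suc k)
  define L where "L = lterm S D k"
  have pS: "mat_pow S k = V ** mat_pow Lam k ** transpose V"
    unfolding S by (rule mat_pow_conj[OF oV])
  have "transpose V ** lterm S D (Suc k) ** V
      = Lam ** (transpose V ** L ** V) + (transpose V ** D ** V) ** mat_pow Lam k"
    by (simp add: L_def mat_pow_conj[OF oV] S matrix_add_ldistrib mm_add_right matrix_mul_assoc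
          orth_QtQ[OF oV] orth_cancel1[OF oV] orth_cancel2[OF oV])
  have "(transpose V ** lterm S D (Suc k) ** V) $ a $ b
      = Lam$a$a * (transpose V ** L ** V)$a$b + (transpose V ** D ** V)$a$b * (Lam$b$b)^k"
  proof -
    have dLk: "diag_matrix (mat_pow Lam k)" by (simp add: mat_pow_diag[OF dL] diag_matrix_def)
    show "(transpose V ** lterm S D (Suc k) ** V) $ a $ b
      = Lam$a$a * (transpose V ** L ** V)$a$b + (transpose V ** D ** V)$a$b * (Lam$b$b)^k"
      unfolding \<open>transpose V ** lterm S D (Suc k) ** V = _\<close>
      by (simp only: vector_add_component diag_left[OF dL] diag_right[OF dLk]) (simp add: mat_pow_diag[OF dL])
  qed
  then show ?case using Suc[of a b] by (simp add: L_def algebra_simps)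
qed

definition gdd :: "(nat \<Rightarrow> real) \<Rightarrow> real \<Rightarrow> real \<Rightarrow> real" where
  "gdd h a b = (\<Sum>k. h k * sig a b k)"

lemma sig_bound:
  assumes "\<bar>a\<bar> \<le> m" "\<bar>b\<bar> \<le> m" "1 \<le> m"
  shows "\<bar>sig a b k\<bar> \<le> real k * m ^ k"
proof (induction k)
  case 0 then show ?case by simp
next
  case (Suc k)
  have m0: "0 \<le> m" using assms by simp
  have "\<bar>sig a b (Suc k)\<bar> \<le> \<bar>a\<bar> * \<bar>sig a b k\<bar> + \<bar>b\<bar> ^ k"
    by (simp add: abs_mult power_abs[symmetric] abs_triangle_ineq[THEN order_trans])
  also have "\<dots> \<le> m * (real k * m ^ k) + m ^ k"
    by (intro add_mono mult_mono Suc power_mono) (use assms in auto)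
  also have "\<dots> \<le> m * (real k * m ^ k) + m ^ Suc k"
    using assms(3) by (simp add: power_increasing)
  also have "\<dots> = real (Suc k) * m ^ Suc k" by (simp add: algebra_simps)
  finally show ?case .
qed

lemma sig_summable:
  assumes "\<forall>x. summable (\<lambda>k. h k * x ^ k)"
  shows "summable (\<lambda>k. h k * sig a b k)"
proof -
  define m where "m = 1 + \<bar>a\<bar> + \<bar>b\<bar>"
  have m: "\<bar>a\<bar> \<le> m" "\<bar>b\<bar> \<le> m" "1 \<le> m" unfolding m_def by auto
  show ?thesis
  proof (rule summable_comparison_test')
    show "summable (\<lambda>k. \<bar>h k\<bar> * real k * m ^ k)" by (rule abs_summ1[OF assms]) (use m in auto)
    fix k
    show "norm (h k * sig a b k) \<le> \<bar>h k\<bar> * real k * m ^ k"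
      using sig_bound[OF m, of k] by (simp add: abs_mult mult.assoc mult_left_mono)
  qed
qed

lemma sig_diff: "sig a b k * (a - b) = a ^ k - b ^ k"
proof (induction k)
  case 0 then show ?case by simp
next
  case (Suc k)
  have "sig a b (Suc k) * (a - b) = a * (sig a b k * (a - b)) + b^k * (a - b)"
    by (simp add: algebra_simps)
  also have "\<dots> = a * (a^k - b^k) + b^k * (a - b)" using Suc by simp
  also have "\<dots> = a ^ Suc k - b ^ Suc k" by (simp add: algebra_simps)
  finally show ?case .
qed

lemma sig_same: "sig a a (Suc n) = real (Suc n) * a ^ n"
  by (induction n) (simp_all add: algebra_simps)

lemma gdd_ne:
  assumes "\<forall>x. summable (\<lambda>k. h k * x ^ k)" "a \<noteq> b"
  shows "gdd h a b = (freq_resp h a - freq_resp h b) / (a - b)"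
proof -
  have "gdd h a b * (a - b) = (\<Sum>k. h k * sig a b k * (a - b))"
    unfolding gdd_def by (rule suminf_mult2[OF sig_summable[OF assms(1)]])
  also have "\<dots> = (\<Sum>k. h k * a ^ k - h k * b ^ k)"
  proof -
    have "h k * sig a b k * (a - b) = h k * a ^ k - h k * b ^ k" for k
    proof -
      have "h k * sig a b k * (a - b) = h k * (sig a b k * (a - b))" by (simp only: mult.assoc)
      also have "\<dots> = h k * (a ^ k - b ^ k)" by (simp only: sig_diff)
      finally show ?thesis by (simp only: right_diff_distrib)
    qed
    then show ?thesis by simp
  qed
  also have "\<dots> = freq_resp h a - freq_resp h b"
    unfolding freq_resp_def using assms(1) by (simp add: suminf_diff)
  finally show ?thesis using assms(2) by (simp add: field_simps)
qed

lemma gdd_deriv: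
  assumes "\<forall>x. summable (\<lambda>k. h k * x ^ k)"
  shows "(freq_resp h has_field_derivative gdd h a a) (at a)"
proof -
  have "DERIV (\<lambda>x. \<Sum>n. h n * x^n) a :> (\<Sum>n. diffs h n * a^n)"
    by (rule termdiffs_strong[of h "\<bar>a\<bar> + 1"]) (use assms in auto)
  moreover have "(\<Sum>n. diffs h n * a^n) = gdd h a a"
  proof -
    have "(\<lambda>n. diffs h n * a^n) sums (\<Sum>n. diffs h n * a^n)"
      using termdiff_converges_all[of h a] assms by (simp add: summable_sums)
    moreover have "(\<lambda>n. h (Suc n) * sig a a (Suc n)) = (\<lambda>n. diffs h n * a^n)"
      by (rule ext) (simp add: sig_same diffs_def del: sig.simps)
    ultimately have "(\<lambda>n. h (Suc n) * sig a a (Suc n)) sums (\<Sum>n. diffs h n * a^n)" by simp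
    then have "(\<lambda>n. h n * sig a a n) sums (\<Sum>n. diffs h n * a^n)"
      using sums_Suc_iff[of "\<lambda>n. h n * sig a a n"] by simp
    then show ?thesis unfolding gdd_def by (simp add: sums_unique)
  qed
  ultimately show ?thesis unfolding freq_resp_def[abs_def] by simp
qed

lemma G_bound:
  assumes sm: "\<forall>x. summable (\<lambda>k. h k * x ^ k)" and il: "integral_lipschitz h C"
  shows "\<bar>(a + b) * gdd h a b\<bar> \<le> 2 * C"
proof -
  have C0: "C > 0" using il unfolding integral_lipschitz_def by simp
  have IL: "\<And>l1 l2. l1 + l2 \<noteq> 0 \<Longrightarrow> \<bar>freq_resp h l2 - freq_resp h l1\<bar> \<le> C * (\<bar>l2 - l1\<bar> / (\<bar>l1 + l2\<bar> / 2))"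
    using il unfolding integral_lipschitz_def by blast
  show ?thesis
  proof (cases "a = b")
    case False
    show ?thesis
    proof (cases "a + b = 0")
      case True then show ?thesis using C0 by simp
    next
      case nz: False
      have "\<bar>freq_resp h a - freq_resp h b\<bar> \<le> C * (\<bar>a - b\<bar> / (\<bar>b + a\<bar> / 2))"
        using IL[of b a] nz by (simp add: add.commute)
      then have key: "\<bar>a + b\<bar> * \<bar>freq_resp h a - freq_resp h b\<bar> \<le> 2 * C * \<bar>a - b\<bar>"
        using nz by (simp add: field_simps add.commute)
      have ab: "\<bar>a - b\<bar> > 0" using False by simp
      have "\<bar>(a + b) * gdd h a b\<bar> = (\<bar>a + b\<bar> * \<bar>freq_resp h a - freq_resp h b\<bar>) / \<bar>a - b\<bar>"
        by (simp add: gdd_ne[OF sm False] abs_mult abs_divide)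
      also have "\<dots> \<le> (2 * C * \<bar>a - b\<bar>) / \<bar>a - b\<bar>"
        by (rule divide_right_mono[OF key]) simp
      also have "\<dots> = 2 * C" using ab by simp
      finally show ?thesis .
    qed
  next
    case True
    then have b: "b = a" by simp
    show ?thesis
    proof (cases "a = 0")
      case True then show ?thesis using b C0 by simp
    next
      case a0: False
      let ?f = "freq_resp h"
      let ?g = "gdd h a a"
      have "((\<lambda>y. (?f y - ?f a) / (y - a)) \<longlongrightarrow> ?g) (at a)"
        using gdd_deriv[OF sm, of a] by (simp add: has_field_derivative_iff)
      then have lim1: "((\<lambda>y. \<bar>(?f y - ?f a) / (y - a)\<bar>) \<longlongrightarrow> \<bar>?g\<bar>) (at a)"
        by (rule tendsto_rabs)
      have lim2: "((\<lambda>y. 2 * C / \<bar>a + y\<bar>) \<longlongrightarrow> 2 * C / \<bar>a + a\<bar>) (at a)"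
        by (intro tendsto_intros) (use a0 in auto)
      have evp: "\<bar>(?f y - ?f a) / (y - a)\<bar> \<le> 2 * C / \<bar>a + y\<bar>"
        if y: "y \<noteq> a" "dist y a < \<bar>a\<bar>" for y
      proof -
        from y have ya: "y - a \<noteq> 0" and ay: "a + y \<noteq> 0"
          by (auto simp: dist_real_def abs_if split: if_splits)
        have "\<bar>?f y - ?f a\<bar> \<le> C * (\<bar>y - a\<bar> / (\<bar>a + y\<bar> / 2))" using IL[OF ay] .
        then show ?thesis
          using ya ay by (simp add: abs_divide field_simps)
      qed
      have ev: "eventually (\<lambda>y. \<bar>(?f y - ?f a) / (y - a)\<bar> \<le> 2 * C / \<bar>a + y\<bar>) (at a)"
        unfolding eventually_at using a0 evp by (intro exI[of _ "\<bar>a\<bar>"]) auto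
      have "\<bar>?g\<bar> \<le> 2 * C / \<bar>a + a\<bar>"
        by (rule tendsto_le[OF trivial_limit_at lim2 lim1 ev])
      then show ?thesis using b a0 by (simp add: abs_mult field_simps)
    qed
  qed
qed

lemma transpose_diff': "transpose ((A::real^'n^'n) - B) = transpose A - transpose B"
  by (simp add: transpose_def vec_eq_iff)

lemma spec_conj_eq: assumes "orthogonal_matrix (Q::real^'n^'n)"
  shows "spec_norm (Q ** A ** transpose Q) = spec_norm A"
  using spec_orth_right[of "transpose Q" "Q ** A"] spec_orth_left[OF assms, of A] assms by simp

lemma first_order:
  fixes S V Lam E U M :: "real^'n^'n" and h :: "nat \<Rightarrow> real"
  assumes sm: "\<forall>x. summable (\<lambda>k. h k * x ^ k)" and il: "integral_lipschitz h C"
    and oV: "orthogonal_matrix V" and dL: "diag_matrix Lam" and S: "S = V ** Lam ** transpose V"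
    and oU: "orthogonal_matrix U" and dM: "diag_matrix M" and E: "E = U ** M ** transpose U"
    and summ: "summable (\<lambda>k. h k *\<^sub>R lterm S (E ** S + S ** E) k)"
  shows "spec_norm (\<Sum>k. h k *\<^sub>R lterm S (E ** S + S ** E) k)
     \<le> 2 * C * (1 + ((spec_norm (U - V) + 1)^2 - 1) * sqrt (real CARD('n))) * spec_norm E"
proof -
  define D where "D = E ** S + S ** E"
  define F where "F = (\<Sum>k. h k *\<^sub>R lterm S D k)"
  define Et where "Et = transpose V ** E ** V"
  define W where "W = transpose V ** U"
  define lam where "lam = (\<lambda>a. Lam$a$a)"
  define G where "G = (\<lambda>a b. (lam a + lam b) * gdd h (lam a) (lam b))"
  define \<delta>0 where "\<delta>0 = spec_norm (U - V)"
  define m where "m = spec_norm M"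
  have C0: "C > 0" using il unfolding integral_lipschitz_def by simp
  have Gb: "\<bar>G a b\<bar> \<le> 2 * C" for a b unfolding G_def by (rule G_bound[OF sm il])
  have m0: "0 \<le> m" unfolding m_def by (rule spec_nonneg)
  have d00: "0 \<le> \<delta>0" unfolding \<delta>0_def by (rule spec_nonneg)
  have mE: "spec_norm E = m" unfolding m_def E by (rule spec_conj_eq[OF oU])
  (* D in V basis *)
  have Dt: "transpose V ** D ** V = Et ** Lam + Lam ** Et"
    by (simp add: D_def Et_def S matrix_add_ldistrib mm_add_right matrix_mul_assoc
          orth_QtQ[OF oV] orth_cancel1[OF oV] orth_cancel2[OF oV])
  have Dte: "(transpose V ** D ** V) $ a $ b = (lam a + lam b) * Et$a$b" for a b
    unfolding Dt by (simp add: diag_left[OF dL] diag_right[OF dL] lam_def algebra_simps)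
  (* F in V basis *)
  have Ft: "transpose V ** F ** V = (\<chi> a b. G a b * Et$a$b)"
  proof -
    have "transpose V ** F ** V = (\<Sum>k. transpose V ** (h k *\<^sub>R lterm S D k) ** V)"
      unfolding F_def by (rule bounded_linear.suminf[OF conj_bl]) (use summ in \<open>simp add: D_def\<close>)
    also have "\<dots> = (\<Sum>k. h k *\<^sub>R (transpose V ** lterm S D k ** V))"
      by (simp add: matrix_scalar_ac scalar_matrix_assoc)
    finally have eq: "transpose V ** F ** V = (\<Sum>k. h k *\<^sub>R (transpose V ** lterm S D k ** V))" .
    have sm2: "summable (\<lambda>k. h k *\<^sub>R (transpose V ** lterm S D k ** V))"
    proof -
      have "summable (\<lambda>k. transpose V ** (h k *\<^sub>R lterm S D k) ** V)"
        by (rule bounded_linear.summable[OF conj_bl]) (use summ in \<open>simp add: D_def\<close>)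
      then show ?thesis by (simp add: matrix_scalar_ac scalar_matrix_assoc)
    qed
    have "(transpose V ** F ** V) $ a $ b = G a b * Et$a$b" for a b
    proof -
      have "(transpose V ** F ** V) $ a $ b = (\<Sum>k. h k * ((transpose V ** D ** V) $ a $ b * sig (lam a) (lam b) k))"
        unfolding eq entry_suminf[OF sm2]
        by (simp add: lterm_conj[OF oV dL S] lam_def)
      also have "\<dots> = (transpose V ** D ** V) $ a $ b * gdd h (lam a) (lam b)"
        unfolding gdd_def
        using suminf_mult[OF sig_summable[OF sm, of "lam a" "lam b"], of "(transpose V ** D ** V) $ a $ b"]
        by (simp add: ac_simps)
      also have "\<dots> = G a b * Et$a$b" by (simp add: Dte G_def)
      finally show ?thesis .
    qed
    then show ?thesis by (simp add: vec_eq_iff)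
  qed
  have specF: "spec_norm F = spec_norm (transpose V ** F ** V)"
    using spec_conj_eq[of "transpose V" F] oV by simp
  (* split *)
  define X1 where "X1 = ((\<chi> a b. G a b * M$a$b) :: real^'n^'n)"
  define X2 where "X2 = ((\<chi> a b. G a b * (Et - M)$a$b) :: real^'n^'n)"
  have split: "transpose V ** F ** V = X1 + X2"
    unfolding Ft X1_def X2_def by (simp add: vec_eq_iff algebra_simps)
  have s1: "spec_norm X1 \<le> 2 * C * m"
  proof (rule diag_spec)
    show "diag_matrix X1" using dM unfolding X1_def diag_matrix_def by simp
    fix i
    have "\<bar>X1$i$i\<bar> = \<bar>G i i\<bar> * \<bar>M$i$i\<bar>" by (simp add: X1_def abs_mult)
    also have "\<dots> \<le> (2 * C) * m"
      by (rule mult_mono[OF Gb]) (use entry_le_spec[of M i i] m_def C0 in auto)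
    finally show "\<bar>X1$i$i\<bar> \<le> 2 * C * m" .
  qed
  (* Et - M *)
  have oW: "orthogonal_matrix W" unfolding W_def using oV oU by (simp add: orthogonal_matrix_mul)
  have EtW: "Et = W ** M ** transpose W"
    by (simp add: Et_def W_def E matrix_transpose_mul matrix_mul_assoc)
  define Dm where "Dm = W - mat 1"
  have Dm: "Dm = transpose V ** (U - V)"
    by (simp add: Dm_def W_def mm_diff_left orth_QtQ[OF oV])
  have sDm: "spec_norm Dm = \<delta>0" unfolding Dm \<delta>0_def
    by (rule spec_orth_left) (simp add: oV)
  have sDmt: "spec_norm (transpose Dm) = \<delta>0" using sDm by (simp add: spec_transpose_eq)
  have EtM: "Et - M = W ** M ** transpose Dm + Dm ** M"
    by (simp add: EtW Dm_def transpose_diff' mm_diff_left mm_diff_right algebra_simps)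
  have sW: "spec_norm W \<le> 1" by (rule orth_spec[OF oW])
  have "spec_norm (Et - M) \<le> spec_norm (W ** M ** transpose Dm) + spec_norm (Dm ** M)"
    unfolding EtM by (rule spec_add)
  also have "\<dots> \<le> m * \<delta>0 + \<delta>0 * m"
  proof -
    have "spec_norm (W ** M ** transpose Dm) \<le> spec_norm (W ** M) * \<delta>0"
      using spec_mult[of "W ** M" "transpose Dm"] sDmt by simp
    also have "\<dots> \<le> m * \<delta>0"
    proof -
      have "spec_norm (W ** M) \<le> spec_norm W * m" using spec_mult[of W M] m_def by simp
      also have "\<dots> \<le> 1 * m" by (rule mult_right_mono[OF sW m0])
      finally show ?thesis using d00 by (simp add: mult_right_mono)
    qed
    finally have a: "spec_norm (W ** M ** transpose Dm) \<le> m * \<delta>0" .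
    have b: "spec_norm (Dm ** M) \<le> \<delta>0 * m" using spec_mult[of Dm M] sDm m_def by simp
    show ?thesis using a b by linarith
  qed
  also have "\<dots> \<le> ((\<delta>0 + 1)^2 - 1) * m"
    using m0 d00 by (simp add: power2_eq_square algebra_simps)
  finally have sEtM: "spec_norm (Et - M) \<le> ((\<delta>0 + 1)^2 - 1) * m" .
  have s2: "spec_norm X2 \<le> 2 * C * (sqrt (real CARD('n)) * (((\<delta>0 + 1)^2 - 1) * m))"
  proof -
    have "spec_norm X2 \<le> norm X2" by (rule spec_le_frob)
    also have "\<dots> \<le> 2 * C * norm (Et - M)" unfolding X2_def by (rule schur_frob[OF Gb])
    also have "\<dots> \<le> 2 * C * (sqrt (real CARD('n)) * spec_norm (Et - M))"
      by (rule mult_left_mono[OF frob_le_spec]) (use C0 in simp)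
    also have "\<dots> \<le> 2 * C * (sqrt (real CARD('n)) * (((\<delta>0 + 1)^2 - 1) * m))"
      by (intro mult_left_mono sEtM) (use C0 in auto)
    finally show ?thesis .
  qed
  have "spec_norm F \<le> spec_norm X1 + spec_norm X2" unfolding specF split by (rule spec_add)
  also have "\<dots> \<le> 2 * C * m + 2 * C * (sqrt (real CARD('n)) * (((\<delta>0 + 1)^2 - 1) * m))"
    using s1 s2 by linarith
  also have "\<dots> = 2 * C * (1 + ((\<delta>0 + 1)^2 - 1) * sqrt (real CARD('n))) * m"
    by (simp add: algebra_simps)
  finally show ?thesis unfolding F_def D_def \<delta>0_def mE .
qed

lemma perm_matrix_transpose:
  assumes "p permutes (UNIV::'n::finite set)"
  shows "transpose (perm_matrix p :: real^'n^'n) = perm_matrix (inv p)"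
proof -
  have "(j = p i) = (i = inv p j)" for i j
    using permutes_inv_eq[OF assms, of j i] by auto
  then show ?thesis by (simp add: transpose_def perm_matrix_def vec_eq_iff)
qed

lemma perm_orth:
  assumes "p permutes (UNIV::'n::finite set)"
  shows "orthogonal_matrix (perm_matrix p :: real^'n^'n)"
proof -
  have inj: "p i = p j \<longleftrightarrow> i = j" for i j using permutes_inj[OF assms] by (auto simp: inj_def)
  have "(transpose (perm_matrix p :: real^'n^'n) ** perm_matrix p) $ i $ j = mat 1 $ i $ j" for i j
  proof -
    have "(transpose (perm_matrix p :: real^'n^'n) ** perm_matrix p) $ i $ j
        = (\<Sum>k\<in>UNIV. (if k = p i then 1 else 0) * (if k = p j then (1::real) else 0))"
      by (simp add: matrix_matrix_mult_def transpose_def perm_matrix_def)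
    also have "\<dots> = (\<Sum>k\<in>UNIV. (if k = p i then (if p i = p j then 1 else 0) else 0))"
      by (rule sum.cong) auto
    also have "\<dots> = (if p i = p j then 1 else 0)" by simp
    also have "\<dots> = mat 1 $ i $ j" by (simp add: inj mat_def)
    finally show ?thesis .
  qed
  then have "transpose (perm_matrix p :: real^'n^'n) ** perm_matrix p = mat 1" by (simp add: vec_eq_iff)
  then show ?thesis by (simp add: orthogonal_matrix)
qed

lemma pod_fun: "(\<lambda>x. transpose Q *v ((A::real^'n^'n) *v x) - Ah *v (transpose Q *v x))
   = (*v) (transpose Q ** A - Ah ** transpose Q)"
proof
  fix x
  show "transpose Q *v (A *v x) - Ah *v (transpose Q *v x) = (transpose Q ** A - Ah ** transpose Q) *v x"
    by (simp only: matrix_vector_mult_diff_rdistrib matrix_vector_mul_assoc)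
qed

lemma pod_le:
  assumes "Q \<in> perm_matrices"
  shows "perm_op_dist (A::real^'n^'n) Ah \<le> spec_norm (transpose Q ** A - Ah ** transpose Q)"
proof -
  have eq: "perm_op_dist A Ah = Inf ((\<lambda>P. spec_norm (transpose P ** A - Ah ** transpose P)) ` perm_matrices)"
    unfolding perm_op_dist_def pod_fun spec_norm_def ..
  have bdd: "bdd_below ((\<lambda>P. spec_norm (transpose P ** A - Ah ** transpose P)) ` perm_matrices)"
    by (rule bdd_belowI[of _ 0]) (auto simp: spec_nonneg)
  show ?thesis unfolding eq
    by (rule cInf_lower[OF imageI[OF assms] bdd])
qed

lemma small_case:
  fixes S V Lam E U M :: "real^'n^'n" and h :: "nat \<Rightarrow> real"
  assumes sm: "\<forall>x. summable (\<lambda>k. h k * x ^ k)" and il: "integral_lipschitz h C"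
    and oV: "orthogonal_matrix V" and dL: "diag_matrix Lam" and S: "S = V ** Lam ** transpose V"
    and oU: "orthogonal_matrix U" and dM: "diag_matrix M" and E: "E = U ** M ** transpose U"
    and eps: "spec_norm E \<le> \<epsilon>" "\<epsilon> \<le> 1"
  shows "spec_norm (graph_filter h S - graph_filter h (S + (E ** S + S ** E)))
     \<le> 2 * C * (1 + ((spec_norm (U - V) + 1)^2 - 1) * sqrt (real CARD('n))) * spec_norm E
        + (norm (mat 1 :: real^'n^'n) * (\<Sum>k. \<bar>h k\<bar> * (real k)^2 * (1 + norm S + 2 * sqrt (real CARD('n)) * norm S) ^ k)
           * (2 * sqrt (real CARD('n)) * norm S)^2) * \<epsilon>^2"
proof -
  define c1 where "c1 = 2 * sqrt (real CARD('n)) * norm S"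
  define R where "R = 1 + norm S + c1"
  define n1 where "n1 = norm (mat 1 :: real^'n^'n)"
  define H2 where "H2 = (\<Sum>k. \<bar>h k\<bar> * (real k)^2 * R ^ k)"
  define D where "D = E ** S + S ** E"
  define d where "d = norm D"
  have c10: "0 \<le> c1" unfolding c1_def by simp
  have e0: "0 \<le> \<epsilon>" using eps spec_nonneg[of E] by linarith
  have n10: "0 \<le> n1" unfolding n1_def by simp
  have d0: "0 \<le> d" unfolding d_def by simp
  have "d \<le> norm (E ** S) + norm (S ** E)" unfolding d_def D_def by (rule norm_triangle_ineq)
  also have "\<dots> \<le> 2 * (norm E * norm S)"
    using frob_mult[of E S] frob_mult[of S E] by (simp add: mult.commute)
  also have "\<dots> \<le> 2 * ((sqrt (real CARD('n)) * \<epsilon>) * norm S)"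
  proof -
    have "norm E \<le> sqrt (real CARD('n)) * spec_norm E" by (rule frob_le_spec)
    also have "\<dots> \<le> sqrt (real CARD('n)) * \<epsilon>" by (rule mult_left_mono[OF eps(1)]) simp
    finally show ?thesis by (simp add: mult_right_mono)
  qed
  also have "\<dots> = c1 * \<epsilon>" by (simp add: c1_def)
  finally have dle: "d \<le> c1 * \<epsilon>" .
  have "c1 * \<epsilon> \<le> c1 * 1" by (rule mult_left_mono[OF eps(2) c10])
  then have dc1: "d \<le> c1" using dle by simp
  have R: "norm S + norm D \<le> R" "1 \<le> R" using dc1 c10 unfolding R_def d_def by auto
  have R0: "0 \<le> R" using R by simp
  note PB = pert_bounds[OF R]
  have sH1: "summable (\<lambda>k. \<bar>h k\<bar> * real k * R ^ k)" by (rule abs_summ1[OF sm R0])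
  have sH2: "summable (\<lambda>k. \<bar>h k\<bar> * (real k)^2 * R ^ k)" by (rule abs_summ2[OF sm R0])
  have sL: "summable (\<lambda>k. h k *\<^sub>R lterm S D k)"
  proof (rule summable_comparison_test')
    show "summable (\<lambda>k. (n1 * d) * (\<bar>h k\<bar> * real k * R ^ k))" by (rule summable_mult[OF sH1])
    fix k
    have "norm (lterm S D k) \<le> n1 * k * R^k * d" using PB[of k] unfolding n1_def d_def by simp
    then have "\<bar>h k\<bar> * norm (lterm S D k) \<le> \<bar>h k\<bar> * (n1 * k * R^k * d)" by (simp add: mult_left_mono)
    then show "norm (h k *\<^sub>R lterm S D k) \<le> (n1 * d) * (\<bar>h k\<bar> * real k * R ^ k)"
      by (simp add: ac_simps)
  qed
  define Rm where "Rm = (\<lambda>k. mat_pow (S + D) k - mat_pow S k - lterm S D k)"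
  have Rmb: "norm (h k *\<^sub>R Rm k) \<le> (n1 * d^2) * (\<bar>h k\<bar> * (real k)^2 * R ^ k)" for k
  proof -
    have "norm (Rm k) \<le> n1 * (real k)^2 * R^k * d^2" using PB[of k] unfolding n1_def d_def Rm_def by simp
    then have "\<bar>h k\<bar> * norm (Rm k) \<le> \<bar>h k\<bar> * (n1 * (real k)^2 * R^k * d^2)" by (simp add: mult_left_mono)
    then show ?thesis by (simp add: ac_simps)
  qed
  have sG: "summable (\<lambda>k. (n1 * d^2) * (\<bar>h k\<bar> * (real k)^2 * R ^ k))" by (rule summable_mult[OF sH2])
  have sRm: "summable (\<lambda>k. h k *\<^sub>R Rm k)"
    by (rule summable_comparison_test'[OF sG Rmb])
  have eqH: "graph_filter h (S + D) - graph_filter h S = (\<Sum>k. h k *\<^sub>R lterm S D k) + (\<Sum>k. h k *\<^sub>R Rm k)"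
  proof -
    have "graph_filter h (S + D) - graph_filter h S = (\<Sum>k. h k *\<^sub>R mat_pow (S + D) k - h k *\<^sub>R mat_pow S k)"
      unfolding graph_filter_def by (rule suminf_diff[OF gf_summable[OF sm] gf_summable[OF sm]])
    also have "\<dots> = (\<Sum>k. h k *\<^sub>R lterm S D k + h k *\<^sub>R Rm k)"
      by (simp add: Rm_def algebra_simps)
    also have "\<dots> = (\<Sum>k. h k *\<^sub>R lterm S D k) + (\<Sum>k. h k *\<^sub>R Rm k)"
      by (rule suminf_add[OF sL sRm, symmetric])
    finally show ?thesis .
  qed
  have specRm: "spec_norm (\<Sum>k. h k *\<^sub>R Rm k) \<le> (n1 * H2 * c1^2) * \<epsilon>^2"
  proof -
    have "spec_norm (\<Sum>k. h k *\<^sub>R Rm k) \<le> norm (\<Sum>k. h k *\<^sub>R Rm k)" by (rule spec_le_frob)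
    also have "\<dots> \<le> (\<Sum>k. (n1 * d^2) * (\<bar>h k\<bar> * (real k)^2 * R ^ k))"
      by (rule norm_suminf_le[OF Rmb sG])
    also have "\<dots> = (n1 * d^2) * H2" unfolding H2_def by (rule suminf_mult[OF sH2])
    also have "\<dots> \<le> (n1 * (c1 * \<epsilon>)^2) * H2"
    proof -
      have "d^2 \<le> (c1 * \<epsilon>)^2" by (rule power_mono[OF dle d0])
      moreover have "0 \<le> H2" unfolding H2_def using R0 by (intro suminf_nonneg sH2) simp
      ultimately show ?thesis using n10 by (intro mult_right_mono mult_left_mono) auto
    qed
    also have "\<dots> = (n1 * H2 * c1^2) * \<epsilon>^2" by (simp add: power_mult_distrib)
    finally show ?thesis .
  qed
  have specF: "spec_norm (\<Sum>k. h k *\<^sub>R lterm S D k)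
     \<le> 2 * C * (1 + ((spec_norm (U - V) + 1)^2 - 1) * sqrt (real CARD('n))) * spec_norm E"
    unfolding D_def by (rule first_order[OF sm il oV dL S oU dM E]) (use sL in \<open>simp add: D_def\<close>)
  have "spec_norm (graph_filter h S - graph_filter h (S + D)) = spec_norm (graph_filter h (S + D) - graph_filter h S)"
    using spec_minus[of "graph_filter h (S + D) - graph_filter h S"] by simp
  also have "\<dots> \<le> spec_norm (\<Sum>k. h k *\<^sub>R lterm S D k) + spec_norm (\<Sum>k. h k *\<^sub>R Rm k)"
    unfolding eqH by (rule spec_add)
  finally show ?thesis using specF specRm
    unfolding D_def n1_def H2_def R_def c1_def by linarith
qed

theorem theorem2:
  fixes S V Lam :: "real^'n^'n" and h :: "nat \<Rightarrow> real" and C :: real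
  assumes "gso S"
    and "orthogonal_matrix V" and "diag_matrix Lam" and "S = V ** Lam ** transpose V"
    and "\<forall>x. summable (\<lambda>k. h k * x ^ k)"
    and "\<forall>x. \<bar>freq_resp h x\<bar> \<le> 1"
    and "integral_lipschitz h C"
  shows "\<exists>K. \<forall>Sh E U M \<epsilon>.
     gso Sh \<longrightarrow> E \<in> rel_perts S Sh \<longrightarrow>
     orthogonal_matrix U \<longrightarrow> diag_matrix M \<longrightarrow> E = U ** M ** transpose U \<longrightarrow>
     rel_dist S Sh \<le> spec_norm E \<longrightarrow> spec_norm E \<le> \<epsilon> \<longrightarrow>
     perm_op_dist (graph_filter h S) (graph_filter h Sh)
       \<le> 2 * C * (1 + ((spec_norm (U - V) + 1)^2 - 1) * sqrt (real CARD('n))) * \<epsilon>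
          + K * \<epsilon>^2"
proof -
  note sm = assms(5) and il = assms(7) and oV = assms(2) and dL = assms(3) and Sdef = assms(4)
  define K1 where "K1 = norm (mat 1 :: real^'n^'n) * (\<Sum>k. \<bar>h k\<bar> * (real k)^2 * (1 + norm S + 2 * sqrt (real CARD('n)) * norm S) ^ k)
           * (2 * sqrt (real CARD('n)) * norm S)^2"
  define K where "K = max 2 K1"
  have symS: "transpose S = S" using assms(1) unfolding gso_def .
  have C0: "C > 0" using il unfolding integral_lipschitz_def by simp
  show ?thesis
  proof (intro exI[of _ K] allI impI)
    fix Sh E U M :: "real^'n^'n" and \<epsilon> :: real
    assume gSh: "gso Sh" and Ein: "E \<in> rel_perts S Sh" and oU: "orthogonal_matrix U"
      and dM: "diag_matrix M" and Edef: "E = U ** M ** transpose U"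
      and "rel_dist S Sh \<le> spec_norm E" and eE: "spec_norm E \<le> \<epsilon>"
    obtain P where Pin: "P \<in> perm_matrices" and PS: "transpose P ** Sh ** P = S + (E ** S + S ** E)"
      using Ein unfolding rel_perts_def by blast
    obtain p where p: "p permutes (UNIV::'n set)" "P = perm_matrix p"
      using Pin unfolding perm_matrices_def by blast
    have oP: "orthogonal_matrix P" using perm_orth[OF p(1)] p(2) by simp
    have Qin: "transpose P \<in> perm_matrices"
      unfolding perm_matrices_def using p perm_matrix_transpose[OF p(1)] permutes_inv[OF p(1)] by auto
    define S' where "S' = S + (E ** S + S ** E)"
    have Sh: "Sh = P ** S' ** transpose P"
      unfolding S'_def PS[symmetric]
      by (simp add: matrix_mul_assoc orth_QQt[OF oP] orth_cancel2[OF oP])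
    have symSh: "transpose Sh = Sh" using gSh unfolding gso_def .
    have symS': "transpose S' = S'"
      unfolding S'_def PS[symmetric] by (simp add: matrix_transpose_mul symSh matrix_mul_assoc)
    have HSh: "graph_filter h Sh = P ** graph_filter h S' ** transpose P"
      unfolding Sh by (rule gf_conj[OF sm oP])
    have "perm_op_dist (graph_filter h S) (graph_filter h Sh)
        \<le> spec_norm (transpose (transpose P) ** graph_filter h S - graph_filter h Sh ** transpose (transpose P))"
      by (rule pod_le[OF Qin])
    also have "\<dots> = spec_norm (P ** (graph_filter h S - graph_filter h S'))"
      by (simp add: HSh orth_cancel1[OF oP] mm_diff_left)
    also have "\<dots> = spec_norm (graph_filter h S - graph_filter h S')"
      by (rule spec_orth_left[OF oP])
    also have "\<dots> \<le> 2 * C * (1 + ((spec_norm (U - V) + 1)^2 - 1) * sqrt (real CARD('n))) * \<epsilon> + K * \<epsilon>^2"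
    proof -
      define coef where "coef = 2 * C * (1 + ((spec_norm (U - V) + 1)^2 - 1) * sqrt (real CARD('n)))"
      have "0 \<le> ((spec_norm (U - V) + 1)^2 - 1)"
        using spec_nonneg[of "U - V"] by (simp add: power2_eq_square algebra_simps)
      then have coef0: "0 \<le> coef" unfolding coef_def using C0 by simp
      have e0: "0 \<le> \<epsilon>" using eE spec_nonneg[of E] by linarith
      show ?thesis
      proof (cases "\<epsilon> \<le> 1")
        case True
        have "spec_norm (graph_filter h S - graph_filter h S') \<le> coef * spec_norm E + K1 * \<epsilon>^2"
          unfolding S'_def coef_def K1_def
          by (rule small_case[OF sm il oV dL Sdef oU dM Edef eE True])
        also have "\<dots> \<le> coef * \<epsilon> + K * \<epsilon>^2"
        proof -
          have "coef * spec_norm E \<le> coef * \<epsilon>" by (rule mult_left_mono[OF eE coef0])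
          moreover have "K1 * \<epsilon>^2 \<le> K * \<epsilon>^2" unfolding K_def by (rule mult_right_mono) auto
          ultimately show ?thesis by linarith
        qed
        finally show ?thesis unfolding coef_def .
      next
        case False
        have "spec_norm (graph_filter h S - graph_filter h S')
            \<le> spec_norm (graph_filter h S) + spec_norm (graph_filter h S')" by (rule spec_diff)
        also have "\<dots> \<le> 1 + 1"
          using gf_sym_bound[OF sm assms(6) symS] gf_sym_bound[OF sm assms(6) symS'] by linarith
        also have "\<dots> \<le> 2 * \<epsilon>^2"
        proof -
          have "1 \<le> \<epsilon>" using False by simp
          then have "1 * 1 \<le> \<epsilon> * \<epsilon>" using \<open>1 \<le> \<epsilon>\<close> by (intro mult_mono) auto
          then show ?thesis by (simp add: power2_eq_square)
        qed
        also have "\<dots> \<le> K * \<epsilon>^2" unfolding K_def by (rule mult_right_mono) auto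
        also have "\<dots> \<le> coef * \<epsilon> + K * \<epsilon>^2" using coef0 e0 by simp
        finally show ?thesis unfolding coef_def .
      qed
    qed
    finally show "perm_op_dist (graph_filter h S) (graph_filter h Sh)
       \<le> 2 * C * (1 + ((spec_norm (U - V) + 1)^2 - 1) * sqrt (real CARD('n))) * \<epsilon> + K * \<epsilon>^2" .
  qed
qed


end
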